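(* Let $(S, +)$ be a commutative semigroup, let $p$ be an idempotent in $(\beta S, +)$, and let $\langle C_n \rangle_{n=1}^\infty$ be a sequence of members of $p$. Then for each $i \in \mathbb{N}$ there exists a sequence $\langle x_{i, j}\rangle_{j=1}^\infty$ in $S$ with $\mathrm{FS}(\langle x_{i, j}\rangle_{j=1}^\infty) \subseteq C_i$, such that for every nonempty finite $F \subseteq \mathbb{N}$, $\sum_{i \in F} \langle x_{i, j}\rangle_{j=1}^\infty \subseteq C_{\min F}$, i.e. $\sum_{i\in F} x_{i,j_i} \in C_{\min F}$ for every choice of $j_i\in\mathbb{N}$ ($i\in F$).
   Context: $\beta S$ is the set of ultrafilters on the discrete semigroup $S$, with the extension of the operation $p+q = \{A \subseteq S : \{x \in S: -x+A \in q\} \in p\}$, where $-x+A=\{y\in S: x+y\in A\}$; $p$ is idempotent if $p+p=p$. For a sequence $\langle x_n\rangle_{n=1}^\infty$, $\mathrm{FS}(\langle x_n\rangle_{n=1}^\infty)=\{\sum_{n\in H}x_n : H \text{ a nonempty finite subset of } \mathbb{N}\}$. For finite $F\subseteq\mathbb{N}$ and sequences $Y_i$, $\sum_{i\in F} Y_i$ is the set of sums $\sum_{i\in F} a_i$ where $a_i$ is a term of $Y_i$. *)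

theory Defs
  imports Main
begin

definition is_ultrafilter :: "'a set set \<Rightarrow> bool" where
  "is_ultrafilter p \<longleftrightarrow>
     {} \<notin> p \<and> UNIV \<in> p \<and>
     (\<forall>A B. A \<in> p \<and> A \<subseteq> B \<longrightarrow> B \<in> p) \<and>
     (\<forall>A B. A \<in> p \<and> B \<in> p \<longrightarrow> A \<inter> B \<in> p) \<and>
     (\<forall>A. A \<in> p \<or> - A \<in> p)"

definition left_shift :: "'a::plus \<Rightarrow> 'a set \<Rightarrow> 'a set" where
  "left_shift x A = {y. x + y \<in> A}"

definition uf_plus :: "'a::plus set set \<Rightarrow> 'a set set \<Rightarrow> 'a set set" where
  "uf_plus p q = {A. {x. left_shift x A \<in> q} \<in> p}"

definition uf_idempotent :: "'a::plus set set \<Rightarrow> bool" where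
  "uf_idempotent p \<longleftrightarrow> is_ultrafilter p \<and> uf_plus p p = p"

text \<open>Sum of a nonempty list in a semigroup (no zero needed).\<close>
fun lsum :: "('b \<Rightarrow> 'a::plus) \<Rightarrow> 'b list \<Rightarrow> 'a" where
  "lsum f [] = undefined"
| "lsum f [x] = f x"
| "lsum f (x # y # ys) = f x + lsum f (y # ys)"

text \<open>Sum over a nonempty finite set of indices (commutativity makes order irrelevant).\<close>
definition nesum :: "(nat \<Rightarrow> 'a::plus) \<Rightarrow> nat set \<Rightarrow> 'a" where
  "nesum f H = lsum f (sorted_list_of_set H)"

definition FS :: "(nat \<Rightarrow> 'a::plus) \<Rightarrow> 'a set" where
  "FS x = {nesum x H | H. finite H \<and> H \<noteq> {} \<and> H \<subseteq> {1..}}"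

end

theory Submission imports Defs "HOL-Library.Nat_Bijection" begin

lemma lsum_cons: "xs \<noteq> [] \<Longrightarrow> lsum f (x # xs) = f x + lsum f xs"
  by (cases xs) auto

lemma lsum_insort:
  fixes f :: "nat \<Rightarrow> 'a::ab_semigroup_add"
  shows "xs \<noteq> [] \<Longrightarrow> lsum f (insort a xs) = f a + lsum f xs"
proof (induction xs)
  case Nil then show ?case by simp
next
  case (Cons y ys)
  show ?case
  proof (cases "ys = []")
    case True then show ?thesis by (simp add: add.commute)
  next
    case False
    then have "insort a ys \<noteq> []" by (cases ys) auto
    with False Cons show ?thesis by (auto simp: lsum_cons ac_simps)
  qed
qed

lemma nesum_single[simp]: "nesum f {a} = f a"
  by (simp add: nesum_def)

lemma nesum_insert:
  fixes f :: "nat \<Rightarrow> 'a::ab_semigroup_add"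
  assumes "finite H" "H \<noteq> {}" "a \<notin> H"
  shows "nesum f (insert a H) = f a + nesum f H"
proof -
  have "sorted_list_of_set (insert a H) = insort a (sorted_list_of_set H)"
    using assms by (simp add: sorted_list_of_set_insert)
  moreover have "sorted_list_of_set H \<noteq> []" using assms by simp
  ultimately show ?thesis unfolding nesum_def by (simp add: lsum_insort)
qed

lemma nesum_cong:
  fixes f :: "nat \<Rightarrow> 'a::ab_semigroup_add"
  assumes "finite H" "H \<noteq> {}" "\<forall>x\<in>H. f x = g x"
  shows "nesum f H = nesum g H"
  using assms by (induction H rule: finite_ne_induct) (auto simp: nesum_insert)

lemma nesum_reindex:
  fixes g :: "nat \<Rightarrow> 'a::ab_semigroup_add"
  assumes "finite F" "F \<noteq> {}" "inj_on h F"
  shows "nesum (\<lambda>i. g (h i)) F = nesum g (h ` F)"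
  using assms
proof (induction F rule: finite_ne_induct)
  case (singleton x) then show ?case by simp
next
  case (insert x F)
  then have "h x \<notin> h ` F" by auto
  with insert show ?case by (simp add: nesum_insert)
qed


definition star :: "'a::plus set set \<Rightarrow> 'a set \<Rightarrow> 'a set" where
  "star p A = {x\<in>A. left_shift x A \<in> p}"

lemma uf_int: "is_ultrafilter p \<Longrightarrow> A \<in> p \<Longrightarrow> B \<in> p \<Longrightarrow> A \<inter> B \<in> p"
  unfolding is_ultrafilter_def by blast

lemma uf_nonempty: "is_ultrafilter p \<Longrightarrow> A \<in> p \<Longrightarrow> \<exists>x. x \<in> A"
  unfolding is_ultrafilter_def by (metis all_not_in_conv)

lemma uf_sub: "is_ultrafilter p \<Longrightarrow> A \<in> p \<Longrightarrow> A \<subseteq> B \<Longrightarrow> B \<in> p"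
  unfolding is_ultrafilter_def by blast

lemma uf_Inter: assumes "finite \<A>" shows "is_ultrafilter p \<Longrightarrow> \<A> \<subseteq> p \<Longrightarrow> A \<in> p \<Longrightarrow> A \<inter> \<Inter>\<A> \<in> p"
  using assms
proof (induction \<A> rule: finite_induct)
  case empty then show ?case by simp
next
  case (insert B \<A>)
  then have "A \<inter> \<Inter>\<A> \<inter> B \<in> p" using uf_int by blast
  then show ?case by (simp add: Int_ac)
qed

lemma star_in:
  assumes "uf_idempotent p" "A \<in> p" shows "star p A \<in> p"
proof -
  have "A \<in> uf_plus p p" using assms unfolding uf_idempotent_def by simp
  then have "{x. left_shift x A \<in> p} \<in> p" unfolding uf_plus_def by simp
  then have "A \<inter> {x. left_shift x A \<in> p} \<in> p" using assms uf_int unfolding uf_idempotent_def by blast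
  moreover have "A \<inter> {x. left_shift x A \<in> p} = star p A" unfolding star_def by auto
  ultimately show ?thesis by simp
qed

lemma star_sub: "star p A \<subseteq> A" unfolding star_def by auto

lemma star_shift:
  fixes A :: "'a::semigroup_add set"
  assumes "uf_idempotent p" "x \<in> star p A" shows "left_shift x (star p A) \<in> p"
proof -
  have l: "left_shift x A \<in> p" using assms(2) unfolding star_def by simp
  then have "left_shift x A \<in> uf_plus p p" using assms unfolding uf_idempotent_def by simp
  then have "{y. left_shift y (left_shift x A) \<in> p} \<in> p" unfolding uf_plus_def by simp
  then have "left_shift x A \<inter> {y. left_shift y (left_shift x A) \<in> p} \<in> p"
    using l assms uf_int unfolding uf_idempotent_def by blast
  moreover have "left_shift x A \<inter> {y. left_shift y (left_shift x A) \<in> p} = left_shift x (star p A)"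
    unfolding star_def left_shift_def by (auto simp: add.assoc)
  ultimately show ?thesis by simp
qed

lemma main_seq:
  fixes p :: "'a::ab_semigroup_add set set"
  assumes idem: "uf_idempotent p" and D: "\<And>m. D m \<in> p"
  shows "\<exists>y. \<forall>H. finite H \<and> H \<noteq> {} \<longrightarrow> nesum y H \<in> D (Min H)"
proof -
  have uf: "is_ultrafilter p" using idem unfolding uf_idempotent_def by simp
  define E where "E m = star p (D m)" for m
  have E: "E m \<in> p" for m using star_in[OF idem D] E_def by simp
  define good where "good n y \<longleftrightarrow> (\<forall>H. H \<subseteq> {..<n} \<and> H \<noteq> {} \<longrightarrow> nesum y H \<in> E (Min H))"
    for n and y :: "nat \<Rightarrow> 'a"
  have stepex: "\<exists>v. good (Suc n) (y(n := v))" if g: "good n y" for n y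
  proof -
    define \<A> where "\<A> = (\<lambda>H. left_shift (nesum y H) (E (Min H))) ` {H. H \<subseteq> {..<n} \<and> H \<noteq> {}}"
    have "finite \<A>" unfolding \<A>_def by simp
    moreover have "\<A> \<subseteq> p"
    proof
      fix B assume "B \<in> \<A>"
      then obtain H where H: "H \<subseteq> {..<n}" "H \<noteq> {}" and B: "B = left_shift (nesum y H) (E (Min H))"
        unfolding \<A>_def by auto
      have "nesum y H \<in> E (Min H)" using g H unfolding good_def by blast
      then show "B \<in> p" using star_shift[OF idem] B E_def by simp
    qed
    ultimately have "E n \<inter> \<Inter>\<A> \<in> p" using uf_Inter uf E by blast
    then obtain v where v: "v \<in> E n \<inter> \<Inter>\<A>" using uf_nonempty[OF uf] by blast
    have "good (Suc n) (y(n := v))" unfolding good_def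
    proof (intro allI impI)
      fix H assume H: "H \<subseteq> {..<Suc n} \<and> H \<noteq> {}"
      have fH: "finite H" using H finite_subset by blast
      show "nesum (y(n := v)) H \<in> E (Min H)"
      proof (cases "n \<in> H")
        case False
        then have "H \<subseteq> {..<n}" using H by (auto simp: subset_iff less_Suc_eq)
        moreover have "nesum (y(n := v)) H = nesum y H"
          using False fH H by (intro nesum_cong) auto
        ultimately show ?thesis using g H unfolding good_def by auto
      next
        case True
        show ?thesis
        proof (cases "H = {n}")
          case True then show ?thesis using v by simp
        next
          case False
          define H' where "H' = H - {n}"
          have H': "H' \<subseteq> {..<n}" "H' \<noteq> {}" "finite H'" "n \<notin> H'" "H = insert n H'"
            using H False True fH unfolding H'_def by auto
          have e1: "nesum (y(n := v)) H = v + nesum (y(n := v)) H'"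
            using H' by (simp add: nesum_insert)
          have e2: "nesum (y(n := v)) H' = nesum y H'"
            using H' by (intro nesum_cong) auto
          have eq: "nesum (y(n := v)) H = nesum y H' + v" unfolding e1 e2 by (rule add.commute)
          have "left_shift (nesum y H') (E (Min H')) \<in> \<A>" unfolding \<A>_def using H' by auto
          then have "nesum y H' + v \<in> E (Min H')" using v unfolding left_shift_def by auto
          moreover have "Min H = Min H'"
          proof -
            have "Min H = min n (Min H')" using H' by (simp add: Min_insert)
            moreover have "Min H' < n" using H' by (meson Min_in lessThan_iff subsetD)
            ultimately show ?thesis by simp
          qed
          ultimately show ?thesis using eq by simp
        qed
      qed
    qed
    then show ?thesis by blast
  qed
  define step where "step n y = (SOME v. good (Suc n) (y(n := v)))" for n y
  define Y where "Y = rec_nat (\<lambda>_. undefined) (\<lambda>n y. y(n := step n y))"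
  have Y0: "Y 0 = (\<lambda>_. undefined)" and YS: "Y (Suc n) = (Y n)(n := step n (Y n))" for n
    unfolding Y_def by simp_all
  have goodY: "good n (Y n)" for n
  proof (induction n)
    case 0 then show ?case unfolding good_def by auto
  next
    case (Suc n)
    then show ?case unfolding YS step_def using stepex by (metis someI_ex)
  qed
  have Yst: "k < m \<Longrightarrow> Y m k = Y (Suc k) k" for k m
  proof (induction m)
    case 0 then show ?case by simp
  next
    case (Suc m)
    then show ?case by (cases "k = m") (auto simp: YS)
  qed
  define y where "y k = Y (Suc k) k" for k
  have "nesum y H \<in> D (Min H)" if H: "finite H" "H \<noteq> {}" for H
  proof -
    define n where "n = Suc (Max H)"
    have sub: "H \<subseteq> {..<n}" using H unfolding n_def by (auto simp: le_imp_less_Suc)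
    have "nesum y H = nesum (Y n) H"
      proof (rule nesum_cong[OF H])
      show "\<forall>k\<in>H. y k = Y n k" using sub Yst unfolding y_def by (metis lessThan_iff subsetD)
    qed
    also have "\<dots> \<in> E (Min H)" using goodY[of n] sub H unfolding good_def by blast
    finally show ?thesis using star_sub E_def by auto
  qed
  then show ?thesis by blast
qed


lemma pe_ge: "i \<le> prod_encode (i, j)" unfolding prod_encode_def by simp
theorem theorem2p5:
  fixes p :: "'a::ab_semigroup_add set set"
    and C :: "nat \<Rightarrow> 'a set"
  assumes "uf_idempotent p"
    and "\<forall>n\<ge>1. C n \<in> p"
  shows "\<exists>x :: nat \<Rightarrow> nat \<Rightarrow> 'a.
           (\<forall>i\<ge>1. FS (x i) \<subseteq> C i) \<and>
           (\<forall>F j. finite F \<and> F \<noteq> {} \<and> F \<subseteq> {1..} \<and> (\<forall>i\<in>F. j i \<ge> (1::nat))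
                 \<longrightarrow> nesum (\<lambda>i. x i (j i)) F \<in> C (Min F))"
proof -
  have uf: "is_ultrafilter p" using assms(1) unfolding uf_idempotent_def by simp
  define D where "D m = (\<Inter>k\<in>{1..m}. C k)" for m
  have D: "D m \<in> p" for m
  proof -
    have "UNIV \<in> p" using uf unfolding is_ultrafilter_def by simp
    moreover have "C ` {1..m} \<subseteq> p" using assms(2) by auto
    ultimately have "UNIV \<inter> \<Inter>(C ` {1..m}) \<in> p" by (intro uf_Inter[OF _ uf]) auto
    then show ?thesis unfolding D_def by simp
  qed
  have DC: "D m \<subseteq> C i" if "1 \<le> i" "i \<le> m" for i m using that unfolding D_def by auto
  obtain y where y: "\<And>H. finite H \<Longrightarrow> H \<noteq> {} \<Longrightarrow> nesum y H \<in> D (Min H)"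
    using main_seq[of p D, OF assms(1) D] by auto
  define x where "x i j = y (prod_encode (i, j))" for i j
  have key: "nesum (\<lambda>k. y (g k)) F \<in> C i"
    if "finite F" "F \<noteq> {}" "inj_on g F" "\<forall>k\<in>F. i \<le> g k" "1 \<le> i" for F g i
  proof -
    have eq: "nesum (\<lambda>k. y (g k)) F = nesum y (g ` F)" using nesum_reindex[OF that(1-3)] .
    have fin: "finite (g ` F)" "g ` F \<noteq> {}" using that by auto
    have "i \<le> Min (g ` F)" using fin that(4) by (subst Min_ge_iff) auto
    then have "D (Min (g ` F)) \<subseteq> C i" using DC that by blast
    then show ?thesis using eq y[OF fin] by auto
  qed
  have P1: "FS (x i) \<subseteq> C i" if "1 \<le> i" for i
  proof
    fix s assume "s \<in> FS (x i)"
    then obtain H where H: "finite H" "H \<noteq> {}" and s: "s = nesum (x i) H" unfolding FS_def by auto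
    have i1: "inj_on (\<lambda>j. prod_encode (i, j)) H" by (simp add: inj_on_def)
    have i2: "\<forall>k\<in>H. i \<le> prod_encode (i, k)" by (simp add: pe_ge)
    have "nesum (\<lambda>k. y (prod_encode (i, k))) H \<in> C i" using key[OF H i1 i2 that] .
    then show "s \<in> C i" unfolding s x_def .
  qed
  have P2: "nesum (\<lambda>i. x i (j i)) F \<in> C (Min F)"
    if F: "finite F" "F \<noteq> {}" "F \<subseteq> {1..}" for F and j :: "nat \<Rightarrow> nat"
  proof -
    have i1: "inj_on (\<lambda>i. prod_encode (i, j i)) F" by (simp add: inj_on_def)
    have i2: "\<forall>k\<in>F. Min F \<le> prod_encode (k, j k)"
    proof
      fix k assume "k \<in> F"
      then have "Min F \<le> k" using F(1) by (rule Min_le[rotated])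
      then show "Min F \<le> prod_encode (k, j k)" using pe_ge[of k "j k"] by linarith
    qed
    have m: "Min F \<in> F" using F(1,2) by (rule Min_in)
    have i3: "1 \<le> Min F" using m F(3) by auto
    have "nesum (\<lambda>k. y (prod_encode (k, j k))) F \<in> C (Min F)" using key[OF F(1,2) i1 i2 i3] .
    then show ?thesis unfolding x_def .
  qed
  show ?thesis using P1 P2 by (intro exI[of _ x]) blast
qed

end
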